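(* Borda's rule (score vector $w_i=(m-i)/(m-1)$, $i=1,\dots,m$) is not dominated by any other $m$-candidate positional rule when $m\in\{3,4\}$, and is dominated by some other $m$-candidate positional rule (namely the $\lfloor m/2\rfloor$-approval rule, whose score vector has exactly $\lfloor m/2\rfloor$ ones followed by zeros) when $m\ge5$.
   Context: For an $m$-candidate positional rule with score vector $w=(w_1,\dots,w_m)$, $1=w_1\ge\cdots\ge w_m=0$, let $\bar w=\frac1m\sum_iw_i$, $\sigma_w^2=\frac1m\sum_iw_i^2-\bar w^2$, $M_w=\{(\lambda,\mu):0\le\lambda\le\mu,\ w_{i+1}\lambda+(1-w_i)\mu\le1,\ i=1,\dots,m-1\}$, and $V_w=\sup\{\lambda(\rho_1(Z)-\bar Z)+\mu(\bar Z-\rho_2(Z)):(\lambda,\mu)\in\sigma_w(\frac{m}{m-1})^{1/2}M_w\}\in[0,\infty]$, where $Z=(Z_1,\dots,Z_m)$ has independent standard normal entries, $\bar Z$ is their mean and $\rho_j(Z)$ the $j$-th largest entry. (Under Impartial Culture, $V_w$ is the limiting distribution of the minimum manipulating coalition size divided by $\sqrt n$.) Let $g_w(v)=\mathbb P(V_w\le v)$. A rule $w$ dominates a rule $w'$ if $g_w(v)\le g_{w'}(v)$ for all $v\ge0$. *)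

theory Defs
  imports "HOL-Probability.Probability"
begin

text \<open>Score vectors are functions nat => real, relevant on indices 1..m.\<close>

definition positional_rule :: "nat \<Rightarrow> (nat \<Rightarrow> real) \<Rightarrow> bool" where
  "positional_rule m w \<longleftrightarrow> w 1 = 1 \<and> w m = 0 \<and>
     (\<forall>i j. 1 \<le> i \<longrightarrow> i \<le> j \<longrightarrow> j \<le> m \<longrightarrow> w j \<le> w i)"

definition borda :: "nat \<Rightarrow> nat \<Rightarrow> real" where
  "borda m i = (real m - real i) / (real m - 1)"

definition approval :: "nat \<Rightarrow> nat \<Rightarrow> nat \<Rightarrow> real" where
  "approval m k i = (if i \<le> k then 1 else 0)"

definition wbar :: "nat \<Rightarrow> (nat \<Rightarrow> real) \<Rightarrow> real" where
  "wbar m w = (\<Sum>i=1..m. w i) / real m"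

definition sigma_w :: "nat \<Rightarrow> (nat \<Rightarrow> real) \<Rightarrow> real" where
  "sigma_w m w = sqrt ((\<Sum>i=1..m. (w i)\<^sup>2) / real m - (wbar m w)\<^sup>2)"

definition M_set :: "nat \<Rightarrow> (nat \<Rightarrow> real) \<Rightarrow> (real \<times> real) set" where
  "M_set m w = {(l, u). 0 \<le> l \<and> l \<le> u \<and>
      (\<forall>i\<in>{1..m-1}. w (i+1) * l + (1 - w i) * u \<le> 1)}"

definition zbar :: "nat \<Rightarrow> (nat \<Rightarrow> real) \<Rightarrow> real" where
  "zbar m z = (\<Sum>i=1..m. z i) / real m"

definition rho :: "nat \<Rightarrow> nat \<Rightarrow> (nat \<Rightarrow> real) \<Rightarrow> real" where
  "rho m j z = rev (sort (map z [1..<m+1])) ! (j - 1)"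

definition V_w :: "nat \<Rightarrow> (nat \<Rightarrow> real) \<Rightarrow> (nat \<Rightarrow> real) \<Rightarrow> ereal" where
  "V_w m w z = Sup {ereal (l * (rho m 1 z - zbar m z) + u * (zbar m z - rho m 2 z)) | l u.
      (l, u) \<in> (\<lambda>(a, b). (sigma_w m w * sqrt (real m / (real m - 1)) * a,
                          sigma_w m w * sqrt (real m / (real m - 1)) * b)) ` M_set m w}"

definition gauss_m :: "nat \<Rightarrow> (nat \<Rightarrow> real) measure" where
  "gauss_m m = PiM {1..m} (\<lambda>_. density lborel std_normal_density)"

definition g_w :: "nat \<Rightarrow> (nat \<Rightarrow> real) \<Rightarrow> real \<Rightarrow> real" where
  "g_w m w v = measure (gauss_m m) {z \<in> space (gauss_m m). V_w m w z \<le> ereal v}"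

definition dominates :: "nat \<Rightarrow> (nat \<Rightarrow> real) \<Rightarrow> (nat \<Rightarrow> real) \<Rightarrow> bool" where
  "dominates m w w' \<longleftrightarrow> (\<forall>v\<ge>0. g_w m w v \<le> g_w m w' v)"

end

theory Submission
  imports Defs "HOL-Library.Nat_Bijection"
begin


lemma rho_basic:
  fixes z :: "nat \<Rightarrow> real"
  assumes m: "m \<ge> 2"
  shows "(\<forall>k\<in>{1..m}. z k \<le> rho m 1 z) \<and>
    (\<exists>i j. i\<in>{1..m} \<and> j\<in>{1..m} \<and> i\<noteq>j \<and> z i = rho m 1 z \<and> z j = rho m 2 z \<and>
        (\<forall>k\<in>{1..m}. k\<noteq>i \<longrightarrow> z k \<le> rho m 2 z))"
proof -
  define L where "L = map z [1..<m+1]"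
  define S where "S = sort L"
  have lenS: "length S = m" by (simp add: S_def L_def)
  have sS: "sorted S" by (simp add: S_def)
  have msS: "mset S = image_mset z (mset [1..<m+1])" by (simp add: S_def L_def)
  have r1: "rho m 1 z = S ! (m-1)" unfolding rho_def S_def[symmetric] L_def[symmetric]
    using m lenS by (simp add: rev_nth)
  have r2: "rho m 2 z = S ! (m-2)" unfolding rho_def S_def[symmetric] L_def[symmetric]
    using m lenS by (simp add: rev_nth numeral_2_eq_2 Suc_diff_Suc)
  have setS: "set S = z ` {1..m}"
    by (metis msS set_image_mset set_mset_mset atLeastLessThanSuc_atLeastAtMost set_upt Suc_eq_plus1)
  have le_last: "x \<le> S ! (m-1)" if xS: "x \<in> set S" for x
  proof -
    obtain p where p: "p < length S" "S ! p = x" using xS by (auto simp: in_set_conv_nth)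
    have "S ! p \<le> S ! (m-1)" using sorted_nth_mono[OF sS, of p "m-1"] p lenS by simp
    thus ?thesis using p by simp
  qed
  have A1: "\<forall>k\<in>{1..m}. z k \<le> rho m 1 z"
  proof
    fix k assume "k \<in> {1..m}"
    hence "z k \<in> set S" unfolding setS by (rule imageI)
    thus "z k \<le> rho m 1 z" unfolding r1 by (rule le_last)
  qed
  have "S ! (m-1) \<in> set S" using lenS m by auto
  then obtain i where i: "i \<in> {1..m}" "z i = S ! (m-1)" using setS by auto
  have tk: "take (Suc (m-1)) S = take (m-1) S @ [S ! (m-1)]"
    using lenS m by (intro take_Suc_conv_app_nth) auto
  have "take (Suc (m-1)) S = S" using lenS m by simp
  hence "mset S = mset (take (m-1) S) + {# S ! (m-1) #}" using tk by (metis mset_append mset.simps union_code add_mset_add_single)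
  hence "mset (take (m-1) S) = mset S - {# S ! (m-1) #}" by simp
  also have "\<dots> = image_mset z (mset [1..<m+1] - {#i#})"
  proof -
    have "{#i#} \<subseteq># mset [1..<m+1]" using i by auto
    hence "image_mset z (mset [1..<m+1] - {#i#}) = image_mset z (mset [1..<m+1]) - image_mset z {#i#}"
      by (rule image_mset_Diff)
    thus ?thesis using msS i by simp
  qed
  finally have mt: "mset (take (m-1) S) = image_mset z (mset [1..<m+1] - {#i#})" .
  hence "set_mset (mset (take (m-1) S)) = set_mset (image_mset z (mset (remove1 i [1..<m+1])))"
    by (simp only: mset_remove1[symmetric])
  hence "set (take (m-1) S) = z ` set (remove1 i [1..<m+1])" by (simp del: mset_remove1)
  also have "set (remove1 i [1..<m+1]) = {1..m} - {i}" by (auto simp: set_remove1_eq)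
  finally have setT: "set (take (m-1) S) = z ` ({1..m} - {i})" .
  have le2: "x \<le> S ! (m-2)" if xS: "x \<in> set (take (m-1) S)" for x
  proof -
    obtain p where p: "p < length (take (m-1) S)" "take (m-1) S ! p = x" using xS by (auto simp: in_set_conv_nth)
    have "S ! p \<le> S ! (m-2)" using sorted_nth_mono[OF sS, of p "m-2"] p lenS by simp
    thus ?thesis using p by simp
  qed
  have B3: "\<forall>k\<in>{1..m}. k\<noteq>i \<longrightarrow> z k \<le> rho m 2 z"
  proof (intro ballI impI)
    fix k assume k: "k \<in> {1..m}" "k \<noteq> i"
    hence "z k \<in> set (take (m-1) S)" unfolding setT by auto
    thus "z k \<le> rho m 2 z" unfolding r2 by (rule le2)
  qed
  have "take (m-1) S ! (m-2) \<in> set (take (m-1) S)" by (rule nth_mem) (use lenS m in simp)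
  hence "S ! (m-2) \<in> set (take (m-1) S)" using m by simp
  then obtain j where jm0: "j \<in> {1..m} - {i}" and j0: "S ! (m-2) = z j" unfolding setT by blast
  have jm: "j \<in> {1..m}" "j \<noteq> i" using jm0 by auto
  have j: "z j = S ! (m-2)" using j0 by simp
  show ?thesis 
    apply (rule conjI[OF A1])
    apply (rule exI[of _ i], rule exI[of _ j])
    using B3 i jm j r1 r2 by auto
qed




definition XX :: "nat \<Rightarrow> (nat \<Rightarrow> real) \<Rightarrow> real" where
  "XX m z = rho m 1 z - rho m 2 z"
definition AA :: "nat \<Rightarrow> (nat \<Rightarrow> real) \<Rightarrow> real" where
  "AA m z = rho m 1 z - zbar m z"
definition BB :: "nat \<Rightarrow> (nat \<Rightarrow> real) \<Rightarrow> real" where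
  "BB m z = zbar m z - rho m 2 z"

lemma AB_sum: "AA m z + BB m z = XX m z"
  by (simp add: AA_def BB_def XX_def)

lemma XX_nonneg: assumes "m \<ge> 2" shows "XX m z \<ge> 0"
proof -
  from rho_basic[OF assms, of z] obtain j where "j \<in> {1..m}" "z j = rho m 2 z" by blast
  moreover have "\<forall>k\<in>{1..m}. z k \<le> rho m 1 z" using rho_basic[OF assms, of z] by blast
  ultimately show ?thesis unfolding XX_def by force
qed

lemma AA_nonneg: assumes "m \<ge> 2" shows "AA m z \<ge> 0"
proof -
  have le: "\<forall>k\<in>{1..m}. z k \<le> rho m 1 z" using rho_basic[OF assms, of z] by blast
  have "(\<Sum>i=1..m. z i) \<le> (\<Sum>i=1..m. rho m 1 z)" using le by (intro sum_mono) auto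
  hence "(\<Sum>i=1..m. z i) \<le> real m * rho m 1 z" by simp
  hence "zbar m z \<le> rho m 1 z" using assms unfolding zbar_def by (simp add: divide_le_eq mult.commute)
  thus ?thesis unfolding AA_def by simp
qed

lemma AA_small: assumes "m \<ge> 2" "k \<in> {1..m}"
  shows "rho m 1 z - z k \<le> real m * AA m z"
proof -
  have le: "\<forall>k\<in>{1..m}. z k \<le> rho m 1 z" using rho_basic[OF assms(1), of z] by blast
  have "(\<Sum>i=1..m. rho m 1 z - z i) \<ge> (\<Sum>i\<in>{k}. rho m 1 z - z i)"
    using le assms(2) by (intro sum_mono2) auto
  hence "rho m 1 z - z k \<le> (\<Sum>i=1..m. rho m 1 z - z i)" by simp
  also have "\<dots> = real m * rho m 1 z - (\<Sum>i=1..m. z i)" by (simp add: sum_subtractf)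
  also have "\<dots> = real m * AA m z" using assms(1) unfolding AA_def zbar_def by (simp add: field_simps)
  finally show ?thesis .
qed

lemma rho1_Max: assumes "m \<ge> 2" shows "rho m 1 z = Max ((\<lambda>k. z k) ` {1..m})"
proof -
  from rho_basic[OF assms, of z] obtain i where i: "i \<in> {1..m}" "z i = rho m 1 z"
    and le: "\<forall>k\<in>{1..m}. z k \<le> rho m 1 z" by blast
  have mem: "rho m 1 z \<in> (\<lambda>k. z k) ` {1..m}" using i by (metis image_eqI)
  show ?thesis
    by (rule sym, rule Max_eqI) (use mem le in auto)
qed

definition PP :: "nat \<Rightarrow> (nat \<times> nat) set" where
  "PP m = {p. fst p \<in> {1..m} \<and> snd p \<in> {1..m} \<and> fst p \<noteq> snd p}"

lemma finite_PP: "finite (PP m)"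
  by (rule finite_subset[of _ "{1..m} \<times> {1..m}"]) (auto simp: PP_def)

lemma rho2_Max: assumes "m \<ge> 2" shows "rho m 2 z = Max ((\<lambda>p. min (z (fst p)) (z (snd p))) ` PP m)"
proof -
  from rho_basic[OF assms, of z] obtain i j where ij: "i\<in>{1..m}" "j\<in>{1..m}" "i\<noteq>j"
     "z i = rho m 1 z" "z j = rho m 2 z" and le2: "\<forall>k\<in>{1..m}. k\<noteq>i \<longrightarrow> z k \<le> rho m 2 z"
    and le: "\<forall>k\<in>{1..m}. z k \<le> rho m 1 z" by blast
  have r21: "rho m 2 z \<le> rho m 1 z" using le ij by force
  show ?thesis
  proof (rule sym, rule Max_eqI)
    show "finite ((\<lambda>p. min (z (fst p)) (z (snd p))) ` PP m)" using finite_PP by simp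
    show "rho m 2 z \<in> (\<lambda>p. min (z (fst p)) (z (snd p))) ` PP m"
      using ij r21 by (intro image_eqI[of _ _ "(i,j)"]) (auto simp: PP_def)
    fix y assume "y \<in> (\<lambda>p. min (z (fst p)) (z (snd p))) ` PP m"
    then obtain a b where ab: "a \<in> {1..m}" "b \<in> {1..m}" "a \<noteq> b" "y = min (z a) (z b)"
      by (auto simp: PP_def)
    show "y \<le> rho m 2 z"
    proof (cases "a = i")
      case True thus ?thesis using ab le2 by force
    next
      case False thus ?thesis using ab le2 by force
    qed
  qed
qed

lemma comp_meas: "(\<lambda>z. z k) \<in> borel_measurable (gauss_m m)" if "k \<in> {1..m}"
proof -
  have "(\<lambda>z. z k) \<in> measurable (gauss_m m) (density lborel std_normal_density)"
    unfolding gauss_m_def using that by (rule measurable_component_singleton)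
  moreover have "measurable (gauss_m m) (density lborel std_normal_density) = borel_measurable (gauss_m m)"
    by (rule measurable_cong_sets) auto
  ultimately show ?thesis by simp
qed

lemma rho1_meas: assumes "m \<ge> 2" shows "(\<lambda>z. rho m 1 z) \<in> borel_measurable (gauss_m m)"
proof -
  have "(\<lambda>z. Max ((\<lambda>k. z k) ` {1..m})) \<in> borel_measurable (gauss_m m)"
    by (rule borel_measurable_Max) (auto intro: comp_meas)
  thus ?thesis using rho1_Max[OF assms] by simp
qed

lemma rho2_meas: assumes "m \<ge> 2" shows "(\<lambda>z. rho m 2 z) \<in> borel_measurable (gauss_m m)"
proof -
  have "(\<lambda>z. Max ((\<lambda>p. min (z (fst p)) (z (snd p))) ` PP m)) \<in> borel_measurable (gauss_m m)"
    by (rule borel_measurable_Max[OF finite_PP], rule borel_measurable_min)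
      (auto intro!: comp_meas simp: PP_def)
  thus ?thesis using rho2_Max[OF assms] by simp
qed

lemma zbar_meas: "(\<lambda>z. zbar m z) \<in> borel_measurable (gauss_m m)"
  unfolding zbar_def by (intro borel_measurable_divide borel_measurable_sum comp_meas) auto

lemma XX_meas: "m \<ge> 2 \<Longrightarrow> XX m \<in> borel_measurable (gauss_m m)"
  unfolding XX_def[abs_def] using rho1_meas rho2_meas by measurable
lemma AA_meas: "m \<ge> 2 \<Longrightarrow> AA m \<in> borel_measurable (gauss_m m)"
  unfolding AA_def[abs_def] using rho1_meas zbar_meas by measurable
lemma BB_meas: "m \<ge> 2 \<Longrightarrow> BB m \<in> borel_measurable (gauss_m m)"
  unfolding BB_def[abs_def] using rho2_meas zbar_meas by measurable




definition cc :: "nat \<Rightarrow> (nat \<Rightarrow> real) \<Rightarrow> real" where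
  "cc m w = sigma_w m w * sqrt (real m / (real m - 1))"

lemma V_le: "V_w m w z \<le> ereal t \<longleftrightarrow>
   (\<forall>a b. (a, b) \<in> M_set m w \<longrightarrow> cc m w * a * AA m z + cc m w * b * BB m z \<le> t)"
proof -
  define c where "c = sigma_w m w * sqrt (real m / (real m - 1))"
  let ?f = "(\<lambda>(a, b). (c * a, c * b)) :: real \<times> real \<Rightarrow> real \<times> real"
  let ?S = "{ereal (l * (rho m 1 z - zbar m z) + u * (zbar m z - rho m 2 z)) | l u. (l, u) \<in> ?f ` M_set m w}"
  have V: "V_w m w z = Sup ?S" unfolding V_w_def c_def by simp
  have mem: "ereal (c * a * AA m z + c * b * BB m z) \<in> ?S" if "(a,b) \<in> M_set m w" for a b
  proof -
    have "(c*a, c*b) \<in> ?f ` M_set m w" using that by (intro image_eqI[of _ _ "(a,b)"]) auto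
    moreover have "c * a * AA m z + c * b * BB m z = (c*a) * (rho m 1 z - zbar m z) + (c*b) * (zbar m z - rho m 2 z)"
      by (simp add: AA_def BB_def)
    ultimately show ?thesis by blast
  qed
  show ?thesis
  proof
    assume "V_w m w z \<le> ereal t"
    hence all: "\<forall>x\<in>?S. x \<le> ereal t" unfolding V Sup_le_iff .
    show "\<forall>a b. (a, b) \<in> M_set m w \<longrightarrow> cc m w * a * AA m z + cc m w * b * BB m z \<le> t"
    proof (intro allI impI)
      fix a b assume "(a,b) \<in> M_set m w"
      from all mem[OF this] have "ereal (c * a * AA m z + c * b * BB m z) \<le> ereal t" by blast
      thus "cc m w * a * AA m z + cc m w * b * BB m z \<le> t" by (simp add: cc_def c_def)
    qed
  next
    assume H: "\<forall>a b. (a, b) \<in> M_set m w \<longrightarrow> cc m w * a * AA m z + cc m w * b * BB m z \<le> t"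
    show "V_w m w z \<le> ereal t" unfolding V Sup_le_iff
    proof
      fix x assume "x \<in> ?S"
      then obtain l u a b where x: "x = ereal (l * (rho m 1 z - zbar m z) + u * (zbar m z - rho m 2 z))"
        and ab: "(a,b) \<in> M_set m w" and lu: "l = c * a" "u = c * b" by auto
      have "cc m w * a * AA m z + cc m w * b * BB m z \<le> t" using H ab by blast
      thus "x \<le> ereal t" using x lu by (simp add: cc_def c_def AA_def BB_def)
    qed
  qed
qed

lemma V_ge: "(a, b) \<in> M_set m w \<Longrightarrow> V_w m w z \<le> ereal t \<Longrightarrow>
   cc m w * a * AA m z + cc m w * b * BB m z \<le> t"
  using V_le by blast

lemma Vset_meas: assumes "m \<ge> 2"
  shows "{z \<in> space (gauss_m m). V_w m w z \<le> ereal v} \<in> sets (gauss_m m)"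
proof -
  define K where "K = (\<Inter>q\<in>M_set m w. {p::real\<times>real. cc m w * fst q * fst p + cc m w * snd q * snd p \<le> v})"
  have "closed K" unfolding K_def
    by (intro closed_INT ballI closed_Collect_le continuous_intros)
  hence Kb: "K \<in> sets borel" by (rule borel_closed)
  have f: "(\<lambda>z. (AA m z, BB m z)) \<in> borel_measurable (gauss_m m)"
    using AA_meas[OF assms] BB_meas[OF assms] by (intro borel_measurable_Pair) auto
  have "(\<lambda>z. (AA m z, BB m z)) -` K \<inter> space (gauss_m m) \<in> sets (gauss_m m)"
    by (rule measurable_sets[OF f Kb])
  moreover have "(\<lambda>z. (AA m z, BB m z)) -` K \<inter> space (gauss_m m) = {z \<in> space (gauss_m m). V_w m w z \<le> ereal v}"
    unfolding K_def V_le by (auto; metis fst_conv snd_conv)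
  ultimately show ?thesis by simp
qed




lemma prob_gauss: "prob_space (gauss_m m)"
  unfolding gauss_m_def by (rule prob_space_PiM) (auto intro: prob_space_normal_density)

lemma sum_lin: "(\<Sum>i=1..n. real n - real i) = real n * (real n - 1) / 2"
proof (induction n)
  case 0 thus ?case by simp
next
  case (Suc n)
  have "(\<Sum>i=1..Suc n. real (Suc n) - real i) = (\<Sum>i=1..n. real (Suc n) - real i) + 0"
    by simp
  also have "(\<Sum>i=1..n. real (Suc n) - real i) = (\<Sum>i=1..n. (real n - real i) + 1)"
    by (rule sum.cong) auto
  also have "\<dots> = real n * (real n - 1) / 2 + real n" using Suc by (simp add: sum.distrib)
  finally show ?case by (simp add: field_simps)
qed

lemma sum_sq: "(\<Sum>i=1..n. (real n - real i)^2) = real n * (real n - 1) * (2 * real n - 1) / 6"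
proof (induction n)
  case 0 thus ?case by simp
next
  case (Suc n)
  have "(\<Sum>i=1..Suc n. (real (Suc n) - real i)^2) = (\<Sum>i=1..n. (real (Suc n) - real i)^2) + 0"
    by simp
  also have "(\<Sum>i=1..n. (real (Suc n) - real i)^2) = (\<Sum>i=1..n. (real n - real i)^2 + 2 * (real n - real i) + 1)"
    by (rule sum.cong) (auto simp: power2_eq_square algebra_simps)
  also have "\<dots> = (\<Sum>i=1..n. (real n - real i)^2) + 2 * (\<Sum>i=1..n. real n - real i) + real n"
    by (simp only: sum.distrib sum_distrib_left[symmetric]) simp
  also have "\<dots> = real n * (real n - 1) * (2 * real n - 1) / 6 + 2 * (real n * (real n - 1) / 2) + real n"
    by (simp only: Suc.IH sum_lin)
  finally show ?case by (simp add: field_simps)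
qed

lemma borda_var: assumes "m \<ge> 2"
  shows "sigma_w m (borda m) = sqrt ((real m + 1) / (12 * (real m - 1)))"
proof -
  have m1: "real m - 1 > 0" using assms by simp
  have "(\<Sum>i=1..m. borda m i) = (\<Sum>i=1..m. real m - real i) / (real m - 1)"
    unfolding borda_def by (rule sum_divide_distrib[symmetric])
  also have "\<dots> = real m / 2" unfolding sum_lin using m1 by (simp add: field_simps)
  finally have s1: "(\<Sum>i=1..m. borda m i) = real m / 2" .
  have "(\<Sum>i=1..m. (borda m i)^2) = (\<Sum>i=1..m. (real m - real i)^2) / (real m - 1)^2"
    unfolding borda_def power_divide by (rule sum_divide_distrib[symmetric])
  also have "\<dots> = (real m * (2 * real m - 1)) * (real m - 1) / 6 / (real m - 1)^2" unfolding sum_sq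
    by (simp add: algebra_simps)
  also have "\<dots> = real m * (2 * real m - 1) / (6 * (real m - 1))" using m1
    by (simp add: power2_eq_square)
  finally have s2: "(\<Sum>i=1..m. (borda m i)^2) = real m * (2 * real m - 1) / (6 * (real m - 1))" .
  show ?thesis unfolding sigma_w_def wbar_def s1 s2 using m1 assms
    by (simp add: field_simps power2_eq_square)
qed

lemma approval_sum: assumes "k \<le> m"
  shows "(\<Sum>i=1..m. approval m k i) = real k" "(\<Sum>i=1..m. (approval m k i)^2) = real k"
proof -
  have "(\<Sum>i=1..m. approval m k i) = (\<Sum>i\<in>{i\<in>{1..m}. i \<le> k}. 1)"
    unfolding approval_def by (subst sum.inter_filter) auto
  also have "{i\<in>{1..m}. i \<le> k} = {1..k}" using assms by auto
  finally show "(\<Sum>i=1..m. approval m k i) = real k" by simp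
  have "\<And>i. (approval m k i)^2 = approval m k i" by (simp add: approval_def)
  thus "(\<Sum>i=1..m. (approval m k i)^2) = real k" using \<open>(\<Sum>i=1..m. approval m k i) = real k\<close> by simp
qed

lemma approval_var: assumes "k \<le> m" "m \<ge> 1"
  shows "sigma_w m (approval m k) = sqrt (real k / real m - (real k / real m)^2)"
  unfolding sigma_w_def wbar_def approval_sum[OF assms(1)] ..


lemma borda_diag: assumes "m \<ge> 3"
  shows "((real m - 1) / (real m - 2), (real m - 1) / (real m - 2)) \<in> M_set m (borda m)"
proof -
  have m2: "real m - 2 > 0" "real m - 1 > 0" using assms by auto
  have T: "(real m - 1) / (real m - 2) \<ge> 0" using m2 by simp
  have "borda m (i+1) * ((real m - 1) / (real m - 2)) + (1 - borda m i) * ((real m - 1) / (real m - 2)) \<le> 1"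
    if "i \<in> {1..m-1}" for i
  proof -
    have e: "1 - borda m i = (real i - 1) / (real m - 1)" using m2 by (simp add: borda_def field_simps)
    have "borda m (i+1) + (1 - borda m i) = ((real m - real (i+1)) + (real i - 1)) / (real m - 1)"
      unfolding e unfolding borda_def by (rule add_divide_distrib[symmetric])
    also have "\<dots> = (real m - 2) / (real m - 1)" by simp
    finally have "borda m (i+1) + (1 - borda m i) = (real m - 2) / (real m - 1)" .
    moreover have "borda m (i+1) * ((real m - 1) / (real m - 2)) + (1 - borda m i) * ((real m - 1) / (real m - 2))
       = (borda m (i+1) + (1 - borda m i)) * ((real m - 1) / (real m - 2))" by (rule distrib_right[symmetric])
    ultimately have "borda m (i+1) * ((real m - 1) / (real m - 2)) + (1 - borda m i) * ((real m - 1) / (real m - 2))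
       = (real m - 2) / (real m - 1) * ((real m - 1) / (real m - 2))" by simp
    also have "\<dots> = 1" using m2 by simp
    finally show ?thesis by simp
  qed
  thus ?thesis unfolding M_set_def using T by auto
qed

lemma borda_ub: assumes "m \<ge> 3" "(a, b) \<in> M_set m (borda m)"
  shows "0 \<le> a" "a \<le> b" "b \<le> (real m - 1) / (real m - 2)"
proof -
  have m2: "real m - 2 > 0" "real m - 1 > 0" using assms by auto
  show "0 \<le> a" "a \<le> b" using assms(2) unfolding M_set_def by auto
  have "m - 1 \<in> {1..m-1}" using assms by auto
  moreover have all: "\<forall>i\<in>{1..m-1}. borda m (i+1) * a + (1 - borda m i) * b \<le> 1"
    using assms(2) unfolding M_set_def by auto
  ultimately have c: "borda m (m - 1 + 1) * a + (1 - borda m (m - 1)) * b \<le> 1" by blast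
  have "borda m (m - 1 + 1) = 0" using assms unfolding borda_def by simp
  moreover have "1 - borda m (m - 1) = (real m - 2) / (real m - 1)"
    using assms m2 unfolding borda_def by (simp add: of_nat_diff field_simps)
  ultimately have "(real m - 2) / (real m - 1) * b \<le> 1" using c by simp
  thus "b \<le> (real m - 1) / (real m - 2)" using m2 by (simp add: field_simps)
qed

lemma approval_11: "(1, 1) \<in> M_set m (approval m k)"
  unfolding M_set_def approval_def by auto

lemma var_nonneg: assumes "m \<ge> 1"
  shows "(\<Sum>i=1..m. (w i)\<^sup>2) / real m - (wbar m w)\<^sup>2 \<ge> 0"
proof -
  define mu where "mu = wbar m w"
  have sw: "(\<Sum>i=1..m. w i) = real m * mu" unfolding mu_def wbar_def using assms by simp
  have "0 \<le> (\<Sum>i=1..m. (w i - mu)^2)" by (intro sum_nonneg) auto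
  also have "\<dots> = (\<Sum>i=1..m. (w i)^2 - 2 * mu * w i + mu^2)" by (rule sum.cong) (auto simp: power2_eq_square algebra_simps)
  also have "\<dots> = (\<Sum>i=1..m. (w i)^2) - 2 * mu * (\<Sum>i=1..m. w i) + real m * mu^2"
    by (simp add: sum.distrib sum_subtractf sum_distrib_left)
  also have "\<dots> = (\<Sum>i=1..m. (w i)^2) - real m * mu^2" unfolding sw by (simp add: power2_eq_square)
  finally have "real m * mu^2 \<le> (\<Sum>i=1..m. (w i)^2)" by simp
  hence "mu^2 \<le> (\<Sum>i=1..m. (w i)^2) / real m" using assms by (simp add: le_divide_eq mult.commute)
  thus ?thesis unfolding mu_def by simp
qed

lemma cc_nonneg: "cc m w \<ge> 0" if "m \<ge> 2"
  unfolding cc_def sigma_w_def using that var_nonneg[of m w] by simp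

lemma cc_compare: assumes "m \<ge> 5"
  shows "cc m (borda m) * ((real m - 1) / (real m - 2)) \<le> cc m (approval m (m div 2))"
proof -
  define k where "k = m div 2"
  define x where "x = real m"
  have x5: "x \<ge> 5" using assms unfolding x_def by simp
  have km: "k \<le> m" "m \<ge> 1" using assms unfolding k_def by auto
  have kk: "4 * real k * (x - real k) \<ge> x^2 - 1"
  proof (cases "even m")
    case True then have "m = 2 * k" unfolding k_def by simp
    thus ?thesis unfolding x_def by (simp add: power2_eq_square algebra_simps)
  next
    case False then have "m = 2 * k + 1" unfolding k_def by presburger
    thus ?thesis unfolding x_def by (simp add: power2_eq_square algebra_simps)
  qed
  have "(x - 5) * (2 * x - 2) \<ge> 0" using x5 by (intro mult_nonneg_nonneg) auto
  hence a: "3 * (x - 2)^2 \<ge> x^2" by (simp add: power2_eq_square algebra_simps)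
  have b1: "x^2 * (x^2 - 1) \<le> 3 * (x - 2)^2 * (x^2 - 1)"
    by (rule mult_right_mono[OF a]) (use x5 one_le_power[of x 2] in simp)
  have b2: "3 * (x - 2)^2 * (x^2 - 1) \<le> 3 * (x - 2)^2 * (4 * real k * (x - real k))"
    by (rule mult_left_mono[OF kk]) simp
  have b3: "3 * (x - 2)^2 * (4 * real k * (x - real k)) = 12 * (x - 2)^2 * (real k * (x - real k))"
    by (simp add: algebra_simps)
  have b: "x^2 * (x^2 - 1) \<le> 12 * (x - 2)^2 * (real k * (x - real k))" using b1 b2 unfolding b3 by (rule order_trans)
  have pos: "x^2 > 0" "(x-2)^2 > 0" using x5 by auto
  have v: "(x + 1) / (12 * (x - 1)) * ((x - 1) / (x - 2))^2 \<le> real k / x - (real k / x)^2"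
  proof -
    have l: "(x + 1) / (12 * (x - 1)) * ((x - 1) / (x - 2))^2 = (x^2 - 1) / (12 * (x-2)^2)"
    proof -
      have nz: "x - 1 \<noteq> 0" "x - 2 \<noteq> 0" using x5 by auto
      have "(x + 1) / (12 * (x - 1)) * ((x - 1) / (x - 2))^2 = ((x+1)*(x-1)^2) / (12*(x-1)*(x-2)^2)"
        by (simp add: power_divide)
      also have "\<dots> = (x^2 - 1) / (12 * (x-2)^2)"
      proof -
        have d1: "12*(x-1)*(x-2)^2 \<noteq> 0" and d2: "12 * (x-2)^2 \<noteq> 0" using nz by auto
        show ?thesis by (subst frac_eq_eq[OF d1 d2]) (simp add: power2_eq_square algebra_simps)
      qed
      finally show ?thesis .
    qed
    have r: "real k / x - (real k / x)^2 = (real k * (x - real k)) / x^2"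
      using x5 by (simp add: power2_eq_square field_simps)
    show ?thesis unfolding l r using b pos by (simp add: divide_le_eq le_divide_eq mult.commute mult.left_commute)
  qed
  have sB: "sigma_w m (borda m) * ((x - 1) / (x - 2)) = sqrt ((x + 1) / (12 * (x - 1)) * ((x - 1) / (x - 2))^2)"
  proof -
    have T0: "(x - 1) / (x - 2) \<ge> 0" using x5 by simp
    have "sqrt ((x + 1) / (12 * (x - 1)) * ((x - 1) / (x - 2))^2) = sqrt ((x + 1) / (12 * (x - 1))) * ((x - 1) / (x - 2))"
      using T0 by (simp only: real_sqrt_mult real_sqrt_abs abs_of_nonneg)
    moreover have "sigma_w m (borda m) = sqrt ((x + 1) / (12 * (x - 1)))" using borda_var[of m] assms unfolding x_def by simp
    ultimately show ?thesis by simp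
  qed
  have sA: "sigma_w m (approval m k) = sqrt (real k / x - (real k / x)^2)"
    using approval_var[OF km] unfolding x_def .
  have "sigma_w m (borda m) * ((x - 1) / (x - 2)) \<le> sigma_w m (approval m k)"
    unfolding sB sA by (rule real_sqrt_le_mono[OF v])
  hence "sqrt (x / (x - 1)) * (sigma_w m (borda m) * ((x - 1) / (x - 2))) \<le> sqrt (x / (x - 1)) * sigma_w m (approval m k)"
    by (rule mult_left_mono) (use x5 in simp)
  thus ?thesis unfolding cc_def k_def[symmetric] x_def[symmetric] by (simp add: algebra_simps)
qed




lemma part5: assumes m5: "m \<ge> 5"
  shows "positional_rule m (approval m (m div 2)) \<and>
           (\<exists>i\<in>{1..m}. approval m (m div 2) i \<noteq> borda m i) \<and>
           dominates m (approval m (m div 2)) (borda m)"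
proof (intro conjI)
  define k where "k = m div 2"
  have k: "k \<ge> 2" "k < m" using m5 unfolding k_def by auto
  show "positional_rule m (approval m (m div 2))"
    unfolding positional_rule_def approval_def k_def[symmetric] using k by auto
  have "approval m k 2 \<noteq> borda m 2"
    using k m5 unfolding approval_def borda_def by (auto simp: divide_eq_1_iff)
  thus "\<exists>i\<in>{1..m}. approval m (m div 2) i \<noteq> borda m i" unfolding k_def using m5 by (intro bexI[of _ 2]) auto
  interpret G: prob_space "gauss_m m" by (rule prob_gauss)
  define T where "T = (real m - 1) / (real m - 2)"
  have T0: "T \<ge> 0" unfolding T_def using m5 by simp
  have cB: "cc m (borda m) \<ge> 0" using cc_nonneg m5 by simp
  have cmp: "cc m (borda m) * T \<le> cc m (approval m k)" using cc_compare[OF m5] unfolding T_def k_def .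
  show "dominates m (approval m (m div 2)) (borda m)"
    unfolding dominates_def g_w_def k_def[symmetric]
  proof (intro allI impI)
    fix v :: real assume "v \<ge> 0"
    have sub: "{z \<in> space (gauss_m m). V_w m (approval m k) z \<le> ereal v}
       \<subseteq> {z \<in> space (gauss_m m). V_w m (borda m) z \<le> ereal v}"
    proof safe
      fix z assume zs: "z \<in> space (gauss_m m)" and HA: "V_w m (approval m k) z \<le> ereal v"
      have X0: "XX m z \<ge> 0" and A0: "AA m z \<ge> 0" using XX_nonneg AA_nonneg m5 by auto
      have H1: "cc m (approval m k) * 1 * AA m z + cc m (approval m k) * 1 * BB m z \<le> v"
        using V_ge[OF approval_11 HA] .
      hence H: "cc m (approval m k) * XX m z \<le> v" unfolding AB_sum[of m z, symmetric] by (simp add: algebra_simps)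
      show "V_w m (borda m) z \<le> ereal v" unfolding V_le
      proof (intro allI impI)
        fix a b assume ab: "(a, b) \<in> M_set m (borda m)"
        have a0: "0 \<le> a" "a \<le> b" "b \<le> T" using borda_ub[OF _ ab] m5 unfolding T_def by auto
        have e: "cc m (borda m) * a * AA m z + cc m (borda m) * b * BB m z
           = cc m (borda m) * ((a - b) * AA m z + b * XX m z)"
          unfolding AB_sum[of m z, symmetric] by (simp add: algebra_simps)
        have "(a - b) * AA m z \<le> 0" using a0 A0 by (simp add: mult_nonpos_nonneg)
        moreover have "b * XX m z \<le> T * XX m z" using a0 X0 by (simp add: mult_right_mono)
        ultimately have "(a - b) * AA m z + b * XX m z \<le> T * XX m z" by simp
        hence "cc m (borda m) * ((a - b) * AA m z + b * XX m z) \<le> cc m (borda m) * (T * XX m z)"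
          using cB by (rule mult_left_mono)
        also have "\<dots> = (cc m (borda m) * T) * XX m z" by simp
        also have "\<dots> \<le> cc m (approval m k) * XX m z" using cmp X0 by (rule mult_right_mono)
        finally show "cc m (borda m) * a * AA m z + cc m (borda m) * b * BB m z \<le> v" using e H by simp
      qed
    qed
    show "measure (gauss_m m) {z \<in> space (gauss_m m). V_w m (approval m k) z \<le> ereal v}
       \<le> measure (gauss_m m) {z \<in> space (gauss_m m). V_w m (borda m) z \<le> ereal v}"
      by (rule G.finite_measure_mono[OF sub Vset_meas]) (use m5 in simp)
  qed
qed




abbreviation NN :: "real measure" where "NN \<equiv> density lborel std_normal_density"

lemma prob_NN: "prob_space NN" by (rule prob_space_normal_density) simp

lemma phi_le1: "std_normal_density x \<le> 1"
proof -
  have "exp (- x\<^sup>2 / 2) \<le> 1" by simp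
  moreover have "1 / sqrt (2 * pi) \<le> 1" using pi_gt3 by (simp add: divide_le_eq)
  ultimately have "(1 / sqrt (2 * pi)) * exp (- x\<^sup>2 / 2) \<le> 1 * 1"
    by (intro mult_mono) auto
  thus ?thesis unfolding std_normal_density_def by simp
qed

lemma phi_ge: assumes "\<bar>x\<bar> \<le> 2" shows "std_normal_density 2 \<le> std_normal_density x"
proof -
  have "x\<^sup>2 \<le> 2\<^sup>2" using assms by (metis abs_le_square_iff abs_numeral)
  hence "exp (- 2\<^sup>2 / 2) \<le> exp (- x\<^sup>2 / 2)" by simp
  thus ?thesis unfolding std_normal_density_def by (intro mult_left_mono) auto
qed

lemma phi2_pos: "std_normal_density 2 > 0"
  unfolding std_normal_density_def by simp

lemma NN_emeasure: "emeasure NN {a..<b} = (\<integral>\<^sup>+ x. ennreal (std_normal_density x) * indicator {a..<b} x \<partial>lborel)"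
  by (rule emeasure_density) auto

lemma NN_le: assumes "a \<le> b" shows "measure NN {a..<b} \<le> b - a"
proof -
  interpret prob_space NN by (rule prob_NN)
  have "emeasure NN {a..<b} \<le> (\<integral>\<^sup>+ x. indicator {a..<b} x \<partial>lborel)"
    unfolding NN_emeasure
    by (intro nn_integral_mono) (auto simp: phi_le1 indicator_def)
  also have "\<dots> = ennreal (b - a)" using assms by simp
  finally show ?thesis using assms by (simp add: emeasure_eq_measure)
qed

lemma NN_ge: assumes "-2 \<le> a" "a \<le> b" "b \<le> 2"
  shows "std_normal_density 2 * (b - a) \<le> measure NN {a..<b}"
proof -
  interpret prob_space NN by (rule prob_NN)
  have "(\<integral>\<^sup>+ x. ennreal (std_normal_density 2) * indicator {a..<b} x \<partial>lborel) \<le> emeasure NN {a..<b}"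
    unfolding NN_emeasure
    by (intro nn_integral_mono) (use assms in \<open>auto simp: phi_ge indicator_def\<close>)
  also have "(\<integral>\<^sup>+ x. ennreal (std_normal_density 2) * indicator {a..<b} x \<partial>lborel) = ennreal (std_normal_density 2) * ennreal (b - a)"
    using assms by (subst nn_integral_cmult_indicator) auto
  finally show ?thesis using assms phi2_pos by (simp add: emeasure_eq_measure ennreal_mult[symmetric])
qed

lemma box_meas: assumes "\<And>k. k \<in> {1..m} \<Longrightarrow> A k \<in> sets borel"
  shows "measure (gauss_m m) (PiE {1..m} A) = (\<Prod>k\<in>{1..m}. measure NN (A k))"
proof -
  interpret P: product_sigma_finite "\<lambda>_. NN"
    by (simp add: product_sigma_finite_def prob_space_imp_sigma_finite prob_NN)
  interpret NP: prob_space NN by (rule prob_NN)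
  interpret G: prob_space "gauss_m m" by (rule prob_gauss)
  have "emeasure (gauss_m m) (PiE {1..m} A) = (\<Prod>k\<in>{1..m}. emeasure NN (A k))"
    unfolding gauss_m_def using assms by (intro P.emeasure_PiM) auto
  also have "\<dots> = (\<Prod>k\<in>{1..m}. ennreal (measure NN (A k)))" by (simp add: NP.emeasure_eq_measure)
  also have "\<dots> = ennreal (\<Prod>k\<in>{1..m}. measure NN (A k))" by (rule prod_ennreal) simp
  finally show ?thesis by (simp add: G.emeasure_eq_measure prod_nonneg)
qed


lemma rho_top2: assumes m: "m \<ge> 2" and z12: "z 2 < z 1" and zk: "\<And>k. k \<in> {3..m} \<Longrightarrow> z k < z 2"
  shows "rho m 1 z = z 1" "rho m 2 z = z 2"
proof -
  from rho_basic[OF m, of z] obtain i j where ij: "i\<in>{1..m}" "j\<in>{1..m}" "i\<noteq>j"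
     "z i = rho m 1 z" "z j = rho m 2 z" and le2: "\<forall>k\<in>{1..m}. k\<noteq>i \<longrightarrow> z k \<le> rho m 2 z"
    and le: "\<forall>k\<in>{1..m}. z k \<le> rho m 1 z" by blast
  have lt1: "z k < z 1" if "k \<in> {1..m}" "k \<noteq> 1" for k
  proof (cases "k = 2")
    case True thus ?thesis using z12 by simp
  next
    case False hence "k \<in> {3..m}" using that by auto
    thus ?thesis using zk z12 by force
  qed
  have "1 \<in> {1..m}" using m by auto
  hence z1le: "z 1 \<le> rho m 1 z" using le by blast
  have i1: "i = 1"
  proof (rule ccontr)
    assume "i \<noteq> 1" hence "z i < z 1" using lt1 ij by blast
    thus False using z1le ij by simp
  qed
  thus "rho m 1 z = z 1" using ij by simp
  have "2 \<in> {1..m}" using m by auto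
  hence "z 2 \<le> rho m 2 z" using le2 i1 by auto
  moreover have "z j \<le> z 2"
  proof (cases "j = 2")
    case True thus ?thesis by simp
  next
    case False hence "j \<in> {3..m}" using ij i1 by auto
    thus ?thesis using zk by force
  qed
  ultimately show "rho m 2 z = z 2" using ij by simp
qed

lemma prod_split12: fixes g :: "nat \<Rightarrow> real" assumes "m \<ge> 2"
  shows "(\<Prod>k\<in>{1..m}. g k) = g 1 * g 2 * (\<Prod>k\<in>{3..m}. g k)"
proof -
  have "{1..m} = insert 1 (insert 2 {3..m})" using assms by auto
  thus ?thesis by simp
qed

lemma lower_bound:
  assumes m: "m \<ge> 3" and s: "s > 0" and d: "\<delta> > 0" "s + \<delta> \<le> 1/2"
  shows "std_normal_density 2 ^ m * \<delta> / 6 \<le> measure (gauss_m m) {z \<in> space (gauss_m m). s < XX m z \<and> XX m z \<le> s + \<delta>}"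
proof -
  interpret G: prob_space "gauss_m m" by (rule prob_gauss)
  define p where "p = std_normal_density 2"
  have p0: "p > 0" unfolding p_def by (rule phi2_pos)
  define h where "h = \<delta> / 3"
  have h0: "h > 0" "h \<le> 1/6" using d s unfolding h_def by auto
  define n where "n = nat \<lfloor>1 / h\<rfloor>"
  have nh1: "real n * h \<le> 1"
  proof -
    have "real n \<le> 1 / h" unfolding n_def using h0 by (simp add: of_nat_nat)
    thus ?thesis using h0 by (simp add: le_divide_eq)
  qed
  have nh2: "real n * h \<ge> 1/2"
  proof -
    have "real n \<ge> 1 / h - 1" unfolding n_def using h0 by (simp add: of_nat_nat)
    hence "real n * h \<ge> (1 / h - 1) * h" using h0 by (simp add: mult_right_mono)
    also have "(1 / h - 1) * h = 1 - h" using h0 by (simp add: field_simps)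
    finally show ?thesis using h0 by simp
  qed
  define I where "I = (\<lambda>j::nat. \<lambda>k::nat. if k = 1 then {real j * h ..< (real j + 1) * h}
      else if k = 2 then {real j * h - s - 2*h ..< real j * h - s - h} else {-2..<(-1::real)})"
  define Bx where "Bx = (\<lambda>j. PiE {1..m} (I j))"
  define S where "S = {z \<in> space (gauss_m m). s < XX m z \<and> XX m z \<le> s + \<delta>}"
  have XXm[measurable]: "XX m \<in> borel_measurable (gauss_m m)" using XX_meas m by simp
  have Sm: "S \<in> sets (gauss_m m)" unfolding S_def by measurable
  have sp: "space (gauss_m m) = PiE {1..m} (\<lambda>_. UNIV)" unfolding gauss_m_def by (simp add: space_PiM)
  have Bsets: "Bx j \<in> sets (gauss_m m)" for j
    unfolding Bx_def gauss_m_def by (rule sets_PiM_I_finite) (auto simp: I_def)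
  have Bsub: "Bx j \<subseteq> S" if j: "j < n" for j
  proof
    fix z assume zB: "z \<in> Bx j"
    have zs: "z \<in> space (gauss_m m)" using zB unfolding Bx_def sp by (auto simp: PiE_iff)
    have mem: "z k \<in> I j k" if "k \<in> {1..m}" for k using PiE_mem[OF zB[unfolded Bx_def] that] .
    have "1 \<in> {1..m}" "2 \<in> {1..m}" using m by auto
    from mem[OF this(1)] mem[OF this(2)]
    have z1: "real j * h \<le> z 1" "z 1 < (real j + 1) * h" and z2: "real j * h - s - 2*h \<le> z 2" "z 2 < real j * h - s - h"
      unfolding I_def by auto
    have zk: "z k < -1" if "k \<in> {3..m}" for k
    proof -
      have "k \<in> {1..m}" "k \<noteq> 1" "k \<noteq> 2" using that by auto
      thus ?thesis using mem[of k] unfolding I_def by auto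
    qed
    have jh: "real j * h \<ge> 0" using h0 by simp
    have "z 2 \<ge> -1/2" using z2 jh d unfolding h_def by linarith
    hence zk2: "z k < z 2" if "k \<in> {3..m}" for k using zk[OF that] by linarith
    have z12: "z 2 < z 1" using z1 z2 s h0 by linarith
    have r: "rho m 1 z = z 1" "rho m 2 z = z 2" using rho_top2[of m z] m z12 zk2 by auto
    have "s < z 1 - z 2" using z1 z2 h0 by linarith
    moreover have "z 1 - z 2 \<le> s + \<delta>" using z1 z2 unfolding h_def by (simp add: algebra_simps)
    ultimately show "z \<in> S" unfolding S_def XX_def using zs r by simp
  qed
  have Bmeas: "measure (gauss_m m) (Bx j) \<ge> p ^ m * h^2" if j: "j < n" for j
  proof -
    have jr: "real j + 1 \<le> real n" using j by simp
    have "(real j + 1) * h \<le> real n * h" by (rule mult_right_mono[OF jr]) (use h0 in simp)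
    hence jh1: "(real j + 1) * h \<le> 1" using nh1 by linarith
    have jh: "real j * h \<ge> 0" using h0 by simp
    have e1: "(real j + 1) * h = real j * h + h" by (simp add: algebra_simps)
    have hd: "3 * h = \<delta>" unfolding h_def by simp
    define g where "g = (\<lambda>k::nat. if k = 1 then p * h else if k = 2 then p * h else p)"
    have "measure (gauss_m m) (Bx j) = (\<Prod>k\<in>{1..m}. measure NN (I j k))"
      unfolding Bx_def by (rule box_meas) (auto simp: I_def)
    also have "\<dots> \<ge> (\<Prod>k\<in>{1..m}. g k)"
    proof (rule prod_mono, rule conjI)
      fix k assume k: "k \<in> {1..m}"
      show "0 \<le> g k" unfolding g_def using p0 h0 by auto
      show "g k \<le> measure NN (I j k)"
      proof -
        consider "k = 1" | "k = 2" | "k \<noteq> 1 \<and> k \<noteq> 2" by blast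
        thus ?thesis
        proof cases
          case 1
          have "p * ((real j + 1) * h - real j * h) \<le> measure NN {real j * h ..< (real j + 1) * h}"
            unfolding p_def by (rule NN_ge) (use jh jh1 h0 e1 in linarith)+
          thus ?thesis using 1 unfolding g_def I_def by (simp add: algebra_simps)
        next
          case 2
          have "p * ((real j * h - s - h) - (real j * h - s - 2*h)) \<le> measure NN {real j * h - s - 2*h ..< real j * h - s - h}"
            unfolding p_def by (rule NN_ge) (use jh jh1 h0 e1 d s hd in linarith)+
          thus ?thesis using 2 unfolding g_def I_def by (simp add: algebra_simps)
        next
          case 3
          have "p * (-1 - (-2)) \<le> measure NN {-2 ..< (-1::real)}"
            unfolding p_def by (rule NN_ge) auto
          thus ?thesis using 3 unfolding g_def I_def by simp
        qed
      qed
    qed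
    also have "(\<Prod>k\<in>{1..m}. g k) = p * h * (p * h) * p ^ (m - 2)"
      using m by (subst prod_split12) (auto simp: g_def)
    also have "\<dots> = p ^ m * h^2"
    proof -
      have "m = Suc (Suc (m - 2))" using m by simp
      hence "p ^ m = p * p * p ^ (m - 2)" by (metis power_Suc mult.assoc)
      thus ?thesis by (simp add: power2_eq_square)
    qed
    finally show ?thesis .
  qed
  have disj: "disjoint_family_on Bx {..<n}"
  unfolding disjoint_family_on_def
  proof (intro ballI impI)
    fix i j assume ij: "i \<in> {..<n}" "j \<in> {..<n}" "i \<noteq> j"
    show "Bx i \<inter> Bx j = {}"
    proof (rule ccontr)
      assume "Bx i \<inter> Bx j \<noteq> {}"
      then obtain z where z: "z \<in> Bx i" "z \<in> Bx j" by blast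
      have "1 \<in> {1..m}" using m by auto
      from PiE_mem[OF z(1)[unfolded Bx_def] this] PiE_mem[OF z(2)[unfolded Bx_def] this]
      have a: "real i * h \<le> z 1" "z 1 < (real i + 1) * h" "real j * h \<le> z 1" "z 1 < (real j + 1) * h"
        unfolding I_def by auto
      have "real i < real j + 1" "real j < real i + 1"
        using a h0 by (meson le_less_trans mult_less_cancel_right_pos)+
      thus False using ij by linarith
    qed
  qed
  have "(\<Sum>j<n. measure (gauss_m m) (Bx j)) = measure (gauss_m m) (\<Union>j<n. Bx j)"
    by (rule G.finite_measure_finite_Union[symmetric]) (use Bsets disj in auto)
  also have "\<dots> \<le> measure (gauss_m m) S"
    by (rule G.finite_measure_mono[OF _ Sm]) (use Bsub in auto)
  finally have up: "(\<Sum>j<n. measure (gauss_m m) (Bx j)) \<le> measure (gauss_m m) S" .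
  have "(\<Sum>j<n. p ^ m * h^2) \<le> (\<Sum>j<n. measure (gauss_m m) (Bx j))"
    by (rule sum_mono) (use Bmeas in auto)
  hence "real n * (p ^ m * h^2) \<le> measure (gauss_m m) S" using up by simp
  moreover have "p ^ m * \<delta> / 6 \<le> real n * (p ^ m * h^2)"
  proof -
    have "p ^ m * \<delta> / 6 = (1/2) * (p ^ m * h)" unfolding h_def by simp
    also have "\<dots> \<le> (real n * h) * (p ^ m * h)"
      by (rule mult_right_mono[OF nh2]) (use p0 h0 in simp)
    also have "\<dots> = real n * (p ^ m * h^2)" by (simp add: power2_eq_square)
    finally show ?thesis .
  qed
  ultimately show ?thesis unfolding S_def p_def by linarith
qed




lemma prod_split123: fixes g :: "nat \<Rightarrow> real" assumes "m \<ge> 3"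
  shows "(\<Prod>k\<in>{1..m}. g k) = g 1 * g 2 * g 3 * (\<Prod>k\<in>{4..m}. g k)"
proof -
  have "{1..m} = insert 1 (insert 2 (insert 3 {4..m}))" using assms by auto
  thus ?thesis by simp
qed

lemma upper_bound:
  assumes m: "m \<ge> 3" and eta: "\<eta> > 0"
  shows "measure (gauss_m m) {z \<in> space (gauss_m m). \<bar>z 2 - z 1\<bar> < \<eta> \<and> \<bar>z 3 - z 1\<bar> < \<eta>} \<le> 9 * \<eta>^2"
proof -
  interpret G: prob_space "gauss_m m" by (rule prob_gauss)
  interpret NP: prob_space NN by (rule prob_NN)
  define f where "f = int_decode"
  define I where "I = (\<lambda>j::int. {of_int j * \<eta> ..< (of_int j + 1) * \<eta>})"
  define J where "J = (\<lambda>j::int. {(of_int j - 1) * \<eta> ..< (of_int j + 2) * \<eta>})"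
  define C where "C = (\<lambda>n::nat. \<lambda>k::nat. if k = 1 then I (f n) else if k = 2 \<or> k = 3 then J (f n) else (UNIV::real set))"
  define Bx where "Bx = (\<lambda>n. PiE {1..m} (C n))"
  define S where "S = {z \<in> space (gauss_m m). \<bar>z 2 - z 1\<bar> < \<eta> \<and> \<bar>z 3 - z 1\<bar> < \<eta>}"
  have sp: "space (gauss_m m) = PiE {1..m} (\<lambda>_. UNIV)" unfolding gauss_m_def by (simp add: space_PiM)
  have Bsets: "Bx n \<in> sets (gauss_m m)" for n
    unfolding Bx_def gauss_m_def by (rule sets_PiM_I_finite) (auto simp: C_def I_def J_def)
  have Isets: "I j \<in> sets NN" for j unfolding I_def by simp
  have cover: "S \<subseteq> (\<Union>n. Bx n)"
  proof
    fix z assume zS: "z \<in> S"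
    hence zs: "z \<in> PiE {1..m} (\<lambda>_. UNIV)" and d: "\<bar>z 2 - z 1\<bar> < \<eta>" "\<bar>z 3 - z 1\<bar> < \<eta>"
      unfolding S_def sp by auto
    define j where "j = \<lfloor>z 1 / \<eta>\<rfloor>"
    have j1: "of_int j * \<eta> \<le> z 1" using eta unfolding j_def
      by (metis floor_divide_lower)
    have j2: "z 1 < (of_int j + 1) * \<eta>" using eta unfolding j_def
      by (metis floor_divide_upper)
    define n where "n = int_encode j"
    have fn: "f n = j" unfolding f_def n_def by simp
    have "z \<in> Bx n" unfolding Bx_def
    proof (rule PiE_I)
      fix k assume k: "k \<in> {1..m}"
      have e1: "(of_int j + 1) * \<eta> = of_int j * \<eta> + \<eta>" "(of_int j - 1) * \<eta> = of_int j * \<eta> - \<eta>"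
        "(of_int j + 2) * \<eta> = of_int j * \<eta> + 2 * \<eta>" by (simp_all add: algebra_simps)
      show "z k \<in> C n k" unfolding C_def fn I_def J_def using j1 j2 d e1
        by (auto simp: abs_less_iff)
    next
      fix k assume "k \<notin> {1..m}" thus "z k = undefined" using zs by (auto simp: PiE_iff extensional_def)
    qed
    thus "z \<in> (\<Union>n. Bx n)" by blast
  qed
  have disjI: "disjoint_family (\<lambda>n. I (f n))"
    unfolding disjoint_family_on_def
  proof (intro ballI impI)
    fix a b :: nat assume ab: "a \<noteq> b"
    hence fab: "f a \<noteq> f b" unfolding f_def by (simp add: inj_int_decode inj_eq)
    show "I (f a) \<inter> I (f b) = {}"
    proof (rule ccontr)
      assume "I (f a) \<inter> I (f b) \<noteq> {}"
      then obtain x where x: "x \<in> I (f a)" "x \<in> I (f b)" by blast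
      hence "of_int (f a) * \<eta> < (of_int (f b) + 1) * \<eta>" "of_int (f b) * \<eta> < (of_int (f a) + 1) * \<eta>"
        unfolding I_def by auto
      hence "of_int (f a) < of_int (f b) + (1::real)" "of_int (f b) < of_int (f a) + (1::real)"
        using eta by (simp_all add: mult_less_cancel_right_pos)
      hence "f a < f b + 1" "f b < f a + 1" by linarith+
      thus False using fab by linarith
    qed
  qed
  have sumsI: "(\<lambda>n. measure NN (I (f n))) sums measure NN (\<Union>n. I (f n))"
    by (rule NP.finite_measure_UNION) (use Isets disjI in auto)
  hence summI: "summable (\<lambda>n. measure NN (I (f n)))" by (rule sums_summable)
  have sumI1: "(\<Sum>n. measure NN (I (f n))) \<le> 1" using sumsI NP.prob_le_1 by (simp add: sums_iff)
  have Bbound: "measure (gauss_m m) (Bx n) \<le> 9 * \<eta>^2 * measure NN (I (f n))" for n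
  proof -
    have "measure (gauss_m m) (Bx n) = (\<Prod>k\<in>{1..m}. measure NN (C n k))"
      unfolding Bx_def by (rule box_meas) (auto simp: C_def I_def J_def)
    also have "\<dots> = measure NN (I (f n)) * measure NN (J (f n)) * measure NN (J (f n)) * (\<Prod>k\<in>{4..m}. measure NN (C n k))"
      using m by (subst prod_split123) (auto simp: C_def)
    also have "(\<Prod>k\<in>{4..m}. measure NN (C n k)) = 1"
    proof (rule prod.neutral)
      have "measure NN UNIV = 1" using NP.prob_space by simp
      thus "\<forall>k\<in>{4..m}. measure NN (C n k) = 1" by (auto simp: C_def)
    qed
    also have "measure NN (J (f n)) \<le> 3 * \<eta>"
    proof -
      have "measure NN (J (f n)) \<le> (of_int (f n) + 2) * \<eta> - (of_int (f n) - 1) * \<eta>"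
        unfolding J_def by (rule NN_le) (use eta in simp)
      thus ?thesis by (simp add: algebra_simps)
    qed
    hence "measure NN (I (f n)) * measure NN (J (f n)) * measure NN (J (f n)) * 1 \<le> measure NN (I (f n)) * (3 * \<eta>) * (3 * \<eta>) * 1"
      using eta by (intro mult_mono) auto
    finally show ?thesis by (simp add: power2_eq_square algebra_simps)
  qed
  have summB: "summable (\<lambda>n. measure (gauss_m m) (Bx n))"
    by (rule summable_comparison_test[of _ "\<lambda>n. 9 * \<eta>^2 * measure NN (I (f n))"])
       (use Bbound summI in \<open>auto intro: summable_mult\<close>)
  have "measure (gauss_m m) S \<le> measure (gauss_m m) (\<Union>n. Bx n)"
    by (rule G.finite_measure_mono[OF cover]) (use Bsets in auto)
  also have "\<dots> \<le> (\<Sum>n. measure (gauss_m m) (Bx n))"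
    by (rule G.finite_measure_subadditive_countably) (use Bsets summB in auto)
  also have "\<dots> \<le> (\<Sum>n. 9 * \<eta>^2 * measure NN (I (f n)))"
    by (rule suminf_le) (use Bbound summB summI in \<open>auto intro: summable_mult\<close>)
  also have "\<dots> = 9 * \<eta>^2 * (\<Sum>n. measure NN (I (f n)))"
    by (rule suminf_mult[OF summI])
  also have "\<dots> \<le> 9 * \<eta>^2 * 1" by (rule mult_left_mono[OF sumI1]) simp
  finally show ?thesis unfolding S_def by simp
qed




lemma core:
  assumes m: "m \<ge> 3" and r: "1/2 \<le> r" "r < 1" and g: "\<gamma> > 0"
  shows "\<exists>s>0. measure (gauss_m m) {z \<in> space (gauss_m m). XX m z \<le> s}
     < measure (gauss_m m) {z \<in> space (gauss_m m). XX m z \<le> s / r \<and> XX m z \<le> \<gamma> * AA m z}"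
proof -
  interpret G: prob_space "gauss_m m" by (rule prob_gauss)
  have XXm[measurable]: "XX m \<in> borel_measurable (gauss_m m)" using XX_meas m by simp
  have AAm[measurable]: "AA m \<in> borel_measurable (gauss_m m)" using AA_meas m by simp
  have c1[measurable]: "(\<lambda>z. z 1) \<in> borel_measurable (gauss_m m)" using m by (intro comp_meas) auto
  have c2[measurable]: "(\<lambda>z. z 2) \<in> borel_measurable (gauss_m m)" using m by (intro comp_meas) auto
  have c3[measurable]: "(\<lambda>z. z 3) \<in> borel_measurable (gauss_m m)" using m by (intro comp_meas) auto
  define q where "q = std_normal_density 2 ^ m"
  have q0: "q > 0" unfolding q_def using phi2_pos by simp
  define c where "c = 1 / r - 1"
  have r0: "r > 0" using r by simp
  have c0: "c > 0" "c \<le> 1" unfolding c_def using r r0 by (auto simp: field_simps)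
  define M where "M = real m"
  have M3: "M \<ge> 3" unfolding M_def using m by simp
  define s where "s = min (1/4) (q * c * \<gamma>^2 / (432 * M^2))"
  have s0: "s > 0" unfolding s_def using q0 c0 g M3 by simp
  have s14: "s \<le> 1/4" unfolding s_def by simp
  have s_small: "s * (432 * M^2) \<le> q * c * \<gamma>^2"
    unfolding s_def using M3 by (simp add: min_def le_divide_eq)
  define \<delta> where "\<delta> = s * c"
  have d0: "\<delta> > 0" unfolding \<delta>_def using s0 c0 by simp
  have sd: "s + \<delta> = s / r" unfolding \<delta>_def c_def using r0 by (simp add: field_simps)
  have sr: "s / r \<le> 2 * s" using r s0 r0 by (simp add: divide_le_eq)
  have sd2: "s + \<delta> \<le> 1/2" using sd sr s14 by linarith
  define \<eta> where "\<eta> = M * (s / r) / \<gamma>"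
  have eta0: "\<eta> > 0" unfolding \<eta>_def using M3 s0 r0 g by simp
  define E1 where "E1 = {z \<in> space (gauss_m m). XX m z \<le> s}"
  define E2 where "E2 = {z \<in> space (gauss_m m). s < XX m z \<and> XX m z \<le> s + \<delta>}"
  define E where "E = {z \<in> space (gauss_m m). XX m z \<le> s / r \<and> XX m z \<le> \<gamma> * AA m z}"
  define Q where "Q = {z \<in> space (gauss_m m). \<bar>z 2 - z 1\<bar> < \<eta> \<and> \<bar>z 3 - z 1\<bar> < \<eta>}"
  have E1m: "E1 \<in> sets (gauss_m m)" unfolding E1_def by measurable
  have E2m: "E2 \<in> sets (gauss_m m)" unfolding E2_def by measurable
  have gA[measurable]: "(\<lambda>z. \<gamma> * AA m z) \<in> borel_measurable (gauss_m m)" using AAm by simp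
  have Em1: "{z \<in> space (gauss_m m). XX m z \<le> s / r} \<in> sets (gauss_m m)" by measurable
  have Em2: "{w \<in> space (gauss_m m). XX m w \<le> \<gamma> * AA m w} \<in> sets (gauss_m m)"
    by (rule borel_measurable_le[OF XXm gA])
  have "E = {z \<in> space (gauss_m m). XX m z \<le> s / r} \<inter> {w \<in> space (gauss_m m). XX m w \<le> \<gamma> * AA m w}"
    unfolding E_def by auto
  hence Em: "E \<in> sets (gauss_m m)" using Em1 Em2 by simp
  have Qm: "Q \<in> sets (gauss_m m)" unfolding Q_def by measurable
  have cov: "E1 \<union> E2 \<subseteq> E \<union> Q"
  proof
    fix z assume "z \<in> E1 \<union> E2"
    hence zs: "z \<in> space (gauss_m m)" and xz: "XX m z \<le> s / r" unfolding E1_def E2_def using sd sr s0 d0 by auto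
    show "z \<in> E \<union> Q"
    proof (cases "XX m z \<le> \<gamma> * AA m z")
      case True thus ?thesis using zs xz unfolding E_def by auto
    next
      case False
      hence "\<gamma> * AA m z < s / r" using xz by simp
      hence Asm: "AA m z < (s / r) / \<gamma>" using g by (simp only: pos_less_divide_eq[OF g]) (simp add: mult.commute)
      have "M * AA m z < M * ((s / r) / \<gamma>)" by (rule mult_strict_left_mono[OF Asm]) (use M3 in simp)
      hence "M * AA m z < \<eta>" unfolding \<eta>_def by simp
      hence close: "rho m 1 z - z k < \<eta>" if "k \<in> {1..m}" for k
        using AA_small[of m k z] that m unfolding M_def by force
      have le: "z k \<le> rho m 1 z" if "k \<in> {1..m}" for k using rho_basic[of m z] m that by auto
      have "1 \<in> {1..m}" "2 \<in> {1..m}" "3 \<in> {1..m}" using m by auto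
      note mem = this
      have a: "rho m 1 z - z 1 < \<eta>" "rho m 1 z - z 2 < \<eta>" "rho m 1 z - z 3 < \<eta>"
        "z 1 \<le> rho m 1 z" "z 2 \<le> rho m 1 z" "z 3 \<le> rho m 1 z"
        using close[OF mem(1)] close[OF mem(2)] close[OF mem(3)] le[OF mem(1)] le[OF mem(2)] le[OF mem(3)] by auto
      have "\<bar>z 2 - z 1\<bar> < \<eta>" "\<bar>z 3 - z 1\<bar> < \<eta>" unfolding abs_less_iff using a by (intro conjI; linarith)+
      thus ?thesis using zs unfolding Q_def by auto
    qed
  qed
  have disj: "E1 \<inter> E2 = {}" unfolding E1_def E2_def by auto
  have "measure (gauss_m m) E1 + measure (gauss_m m) E2 = measure (gauss_m m) (E1 \<union> E2)"
    by (rule G.finite_measure_Union[symmetric, OF E1m E2m disj])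
  also have "\<dots> \<le> measure (gauss_m m) (E \<union> Q)" by (rule G.finite_measure_mono[OF cov]) (use Em Qm in auto)
  also have "\<dots> \<le> measure (gauss_m m) E + measure (gauss_m m) Q" by (rule measure_subadditive[OF Em Qm]) (simp_all add: G.emeasure_eq_measure)
  finally have main: "measure (gauss_m m) E1 + measure (gauss_m m) E2 \<le> measure (gauss_m m) E + measure (gauss_m m) Q" .
  have lb: "q * \<delta> / 6 \<le> measure (gauss_m m) E2" unfolding E2_def q_def by (rule lower_bound[OF m s0 d0 sd2])
  have ub: "measure (gauss_m m) Q \<le> 9 * \<eta>^2" unfolding Q_def by (rule upper_bound[OF m eta0])
  have "9 * \<eta>^2 < q * \<delta> / 6"
  proof -
    have "M * (s / r) \<le> M * (2 * s)" by (rule mult_left_mono[OF sr]) (use M3 in simp)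
    hence "\<eta> \<le> M * (2 * s) / \<gamma>" unfolding \<eta>_def by (rule divide_right_mono) (use g in simp)
    hence "\<eta>^2 \<le> (M * (2 * s) / \<gamma>)^2" using eta0 by (simp add: power_mono)
    hence "9 * \<eta>^2 \<le> 36 * M^2 * s^2 / \<gamma>^2" by (simp add: power_divide power_mult_distrib)
    also have "\<dots> < q * \<delta> / 6"
    proof -
      have "36 * M^2 * s^2 * 6 = s * (s * (216 * M^2))" by (simp add: power2_eq_square)
      also have "\<dots> < s * (q * c * \<gamma>^2)"
      proof -
        have "s * (216 * M^2) < s * (432 * M^2)" using s0 M3 by simp
        hence "s * (216 * M^2) < q * c * \<gamma>^2" using s_small by linarith
        thus ?thesis using s0 by simp
      qed
      finally have "36 * M^2 * s^2 * 6 < s * (q * c * \<gamma>^2)" .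
      hence "36 * M^2 * s^2 < (q * \<delta> / 6) * \<gamma>^2" unfolding \<delta>_def by (simp add: algebra_simps)
      thus ?thesis using g by (simp add: divide_less_eq)
    qed
    finally show ?thesis .
  qed
  hence "measure (gauss_m m) E1 < measure (gauss_m m) E" using main lb ub by linarith
  thus ?thesis using s0 unfolding E1_def E_def by blast
qed




lemma pos_comb: fixes u v :: real and c1 c2 c3 :: real
  assumes "0 \<le> u" "u \<le> 1" "0 \<le> v" "v \<le> 1" "u > 0 \<or> v > 0" "c1 > 0" "c2 > 0" "c3 \<ge> 0"
  shows "c1 * u * (4 - u) + c2 * v * (4 - v) + c3 * u * v > 0"
proof -
  have t1: "c1 * u * (4 - u) \<ge> 0" using assms by simp
  have t2: "c2 * v * (4 - v) \<ge> 0" using assms by simp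
  have t3: "c3 * u * v \<ge> 0" using assms by simp
  from assms(5) show ?thesis
  proof
    assume "u > 0" hence "c1 * u * (4 - u) > 0" using assms by simp
    thus ?thesis using t2 t3 by linarith
  next
    assume "v > 0" hence "c2 * v * (4 - v) > 0" using assms by simp
    thus ?thesis using t1 t3 by linarith
  qed
qed

lemma p3a: fixes a :: real assumes "a > 1/2"
  shows "3 * (1 + a^2) - (1 + a)^2 < 6 * a^2"
proof -
  have "(2*a - 1) * (a + 1) > 0" using assms by (intro mult_pos_pos) auto
  moreover have "6 * a^2 - (3 * (1 + a^2) - (1 + a)^2) = 2 * ((2*a - 1) * (a + 1))"
    by (simp add: power2_eq_square algebra_simps)
  ultimately show ?thesis by linarith
qed

lemma p3b: fixes a :: real assumes "a < 1/2"
  shows "3 * (1 + a^2) - (1 + a)^2 < 6 * (1 - a)^2"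
proof -
  have "(1 - 2*a) * (2 - a) > 0" using assms by (intro mult_pos_pos) auto
  moreover have "6 * (1 - a)^2 - (3 * (1 + a^2) - (1 + a)^2) = 2 * ((1 - 2*a) * (2 - a))"
    by (simp add: power2_eq_square algebra_simps)
  ultimately show ?thesis by linarith
qed

lemma p4a: fixes a b :: real assumes "0 \<le> b" "b \<le> a" "a \<le> 1" "a \<ge> 1 + b - a" "a \<ge> 1 - b" "\<not> (a = 2/3 \<and> b = 1/3)"
  shows "4 * (1 + a^2 + b^2) - (1 + a + b)^2 < 5 * a^2"
proof -
  define u where "u = 2*a - 1 - b"
  define v where "v = a + b - 1"
  have uv: "u > 0 \<or> v > 0"
  proof (rule ccontr)
    assume "\<not> (u > 0 \<or> v > 0)"
    hence "u = 0" "v = 0" using assms unfolding u_def v_def by auto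
    hence "a = 2/3" "b = 1/3" unfolding u_def v_def by linarith+
    thus False using assms by simp
  qed
  have "3 * u * (4 - u) + 6 * v * (4 - v) + 18 * u * v > 0"
    by (rule pos_comb) (use assms uv in \<open>auto simp: u_def v_def\<close>)
  moreover have "9 * (5 * a^2 - (4 * (1 + a^2 + b^2) - (1 + a + b)^2)) = 3 * u * (4 - u) + 6 * v * (4 - v) + 18 * u * v"
    unfolding u_def v_def by (simp add: power2_eq_square algebra_simps)
  ultimately have "0 < 9 * (5 * a^2 - (4 * (1 + a^2 + b^2) - (1 + a + b)^2))" by simp
  thus ?thesis by simp
qed

lemma p4b: fixes a b :: real assumes "0 \<le> b" "b \<le> a" "a \<le> 1" "1 + b - a > a" "1 + b - a \<ge> 1 - b"
  shows "4 * (1 + a^2 + b^2) - (1 + a + b)^2 < 5 * (1 + b - a)^2"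
proof -
  define u where "u = 1 + b - 2*a"
  define v where "v = 2*b - a"
  have "6 * u * (4 - u) + 6 * v * (4 - v) + 24 * u * v > 0"
    by (rule pos_comb) (use assms in \<open>auto simp: u_def v_def\<close>)
  moreover have "9 * (5 * (1 + b - a)^2 - (4 * (1 + a^2 + b^2) - (1 + a + b)^2)) = 6 * u * (4 - u) + 6 * v * (4 - v) + 24 * u * v"
    unfolding u_def v_def by (simp add: power2_eq_square algebra_simps)
  ultimately have "0 < 9 * (5 * (1 + b - a)^2 - (4 * (1 + a^2 + b^2) - (1 + a + b)^2))" by simp
  thus ?thesis by simp
qed

lemma p4c: fixes a b :: real assumes "0 \<le> b" "b \<le> a" "a \<le> 1" "1 - b > a" "1 - b > 1 + b - a"
  shows "4 * (1 + a^2 + b^2) - (1 + a + b)^2 < 5 * (1 - b)^2"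
proof -
  define u where "u = 1 - b - a"
  define v where "v = a - 2*b"
  have "6 * u * (4 - u) + 3 * v * (4 - v) + 18 * u * v > 0"
    by (rule pos_comb) (use assms in \<open>auto simp: u_def v_def\<close>)
  moreover have "9 * (5 * (1 - b)^2 - (4 * (1 + a^2 + b^2) - (1 + a + b)^2)) = 6 * u * (4 - u) + 3 * v * (4 - v) + 18 * u * v"
    unfolding u_def v_def by (simp add: power2_eq_square algebra_simps)
  ultimately have "0 < 9 * (5 * (1 - b)^2 - (4 * (1 + a^2 + b^2) - (1 + a + b)^2))" by simp
  thus ?thesis by simp
qed




lemma pos_bounds: assumes "positional_rule m w" "k \<in> {1..m}"
  shows "0 \<le> w k" "w k \<le> 1"
proof -
  have k: "1 \<le> k" "k \<le> m" using assms(2) by auto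
  have P: "w 1 = 1" "w m = 0" "\<And>i j. 1 \<le> i \<Longrightarrow> i \<le> j \<Longrightarrow> j \<le> m \<Longrightarrow> w j \<le> w i"
    using assms(1) unfolding positional_rule_def by auto
  show "0 \<le> w k" using P(3)[of k m] k P(2) by simp
  show "w k \<le> 1" using P(3)[of 1 k] k P(1) by simp
qed

lemma region_bound:
  assumes m: "m \<ge> 2" and pw: "positional_rule m w" and i: "i \<in> {1..m-1}"
    and gpos: "1 + w (i+1) - w i > 0" and reg: "XX m z \<le> (1 + w (i+1) - w i) * AA m z"
  shows "V_w m w z \<le> ereal (cc m w / (1 + w (i+1) - w i) * XX m z)"
proof -
  define \<gamma> where "\<gamma> = 1 + w (i+1) - w i"
  define \<alpha> where "\<alpha> = w (i+1)"
  define \<beta> where "\<beta> = 1 - w i"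
  have g0: "\<gamma> > 0" using gpos unfolding \<gamma>_def .
  have i1: "i+1 \<in> {1..m}" "i \<in> {1..m}" using i by auto
  have al: "0 \<le> \<alpha>" "\<alpha> \<le> 1" unfolding \<alpha>_def using pos_bounds[OF pw i1(1)] by auto
  have be: "0 \<le> \<beta>" unfolding \<beta>_def using pos_bounds[OF pw i1(2)] by auto
  have gab: "\<gamma> = \<alpha> + \<beta>" unfolding \<gamma>_def \<alpha>_def \<beta>_def by simp
  have X0: "XX m z \<ge> 0" and A0: "AA m z \<ge> 0" using XX_nonneg AA_nonneg m by auto
  have c0: "cc m w \<ge> 0" using cc_nonneg m by simp
  show ?thesis unfolding V_le \<gamma>_def[symmetric]
  proof (intro allI impI)
    fix a b assume ab: "(a, b) \<in> M_set m w"
    have a0: "0 \<le> a" "a \<le> b" using ab unfolding M_set_def by auto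
    have con: "\<alpha> * a + \<beta> * b \<le> 1" using ab i unfolding M_set_def \<alpha>_def \<beta>_def by auto
    have key: "\<gamma> * ((a - b) * AA m z + b * XX m z) \<le> XX m z"
    proof (cases "\<gamma> * b \<le> 1")
      case True
      have "(a - b) * AA m z \<le> 0" using a0 A0 by (simp add: mult_nonpos_nonneg)
      hence "\<gamma> * ((a - b) * AA m z) \<le> 0" using g0 by (simp add: mult_nonneg_nonpos)
      moreover have "(\<gamma> * b) * XX m z \<le> 1 * XX m z" using True X0 by (rule mult_right_mono)
      ultimately show ?thesis by (simp add: algebra_simps)
    next
      case False
      define t where "t = \<gamma> * b - 1"
      have t0: "t > 0" unfolding t_def using False by simp
      have "\<alpha> * (b - a) \<ge> t" unfolding t_def gab using con by (simp add: algebra_simps)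
      moreover have "\<alpha> * (b - a) \<le> 1 * (b - a)" using al a0 by (intro mult_right_mono) auto
      ultimately have ba: "b - a \<ge> t" by simp
      have "t * AA m z \<le> (b - a) * AA m z" using ba A0 by (rule mult_right_mono)
      hence "(a - b) * AA m z \<le> - (t * AA m z)" by (simp add: algebra_simps)
      hence "\<gamma> * ((a - b) * AA m z) \<le> \<gamma> * (- (t * AA m z))" using g0 by (intro mult_left_mono) auto
      moreover have "t * XX m z \<le> t * (\<gamma> * AA m z)" using reg t0 unfolding \<gamma>_def by (simp add: mult_left_mono)
      moreover have "\<gamma> * b = t + 1" unfolding t_def by simp
      ultimately have "\<gamma> * ((a - b) * AA m z) + (\<gamma> * b) * XX m z \<le> XX m z"
        by (simp add: algebra_simps)
      thus ?thesis by (simp add: algebra_simps)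
    qed
    have "cc m w * a * AA m z + cc m w * b * BB m z = cc m w * ((a - b) * AA m z + b * XX m z)"
      unfolding AB_sum[of m z, symmetric] by (simp add: algebra_simps)
    also have "\<dots> \<le> cc m w * (XX m z / \<gamma>)"
    proof (rule mult_left_mono[OF _ c0])
      show "(a - b) * AA m z + b * XX m z \<le> XX m z / \<gamma>" using key g0 by (simp add: le_divide_eq mult.commute)
    qed
    also have "\<dots> = cc m w / \<gamma> * XX m z" by simp
    finally show "cc m w * a * AA m z + cc m w * b * BB m z \<le> cc m w / \<gamma> * XX m z" .
  qed
qed


lemma key_generic:
  assumes m: "m \<ge> 3" and g: "\<gamma> > 0"
    and v: "(\<Sum>i=1..m. (w i)\<^sup>2) / real m - (wbar m w)\<^sup>2 < (real m + 1) / (12 * (real m - 1)) * ((real m - 1) / (real m - 2))^2 * \<gamma>^2"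
  shows "cc m w / \<gamma> < cc m (borda m) * ((real m - 1) / (real m - 2))"
proof -
  define T where "T = (real m - 1) / (real m - 2)"
  define vb where "vb = (real m + 1) / (12 * (real m - 1))"
  have T0: "T > 0" unfolding T_def using m by simp
  have vb0: "vb > 0" unfolding vb_def using m by simp
  have sB: "sigma_w m (borda m) = sqrt vb" unfolding vb_def using borda_var[of m] m by simp
  have "sigma_w m w < sqrt (vb * T^2 * \<gamma>^2)" unfolding sigma_w_def
    by (rule real_sqrt_less_mono) (use v in \<open>simp add: vb_def T_def\<close>)
  also have "sqrt (vb * T^2 * \<gamma>^2) = sqrt vb * T * \<gamma>" using T0 g vb0 by (simp add: real_sqrt_mult)
  finally have "sigma_w m w < sigma_w m (borda m) * T * \<gamma>" unfolding sB .
  hence "sigma_w m w / \<gamma> < sigma_w m (borda m) * T" using g by (simp add: divide_less_eq)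
  moreover have K: "sqrt (real m / (real m - 1)) > 0" using m by simp
  ultimately have "sqrt (real m / (real m - 1)) * (sigma_w m w / \<gamma>) < sqrt (real m / (real m - 1)) * (sigma_w m (borda m) * T)"
    by (intro mult_strict_left_mono) auto
  thus ?thesis unfolding cc_def T_def[symmetric] by (simp add: algebra_simps)
qed

lemma nondom:
  assumes m: "m \<ge> 3" and pw: "positional_rule m w" and i: "i \<in> {1..m-1}"
    and gpos: "1 + w (i+1) - w i > 0"
    and lt: "cc m w / (1 + w (i+1) - w i) < cc m (borda m) * ((real m - 1) / (real m - 2))"
  shows "\<not> dominates m w (borda m)"
proof
  assume dom: "dominates m w (borda m)"
  interpret G: prob_space "gauss_m m" by (rule prob_gauss)
  have XXm[measurable]: "XX m \<in> borel_measurable (gauss_m m)" using XX_meas m by simp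
  define \<gamma> where "\<gamma> = 1 + w (i+1) - w i"
  define T where "T = (real m - 1) / (real m - 2)"
  define kB where "kB = cc m (borda m) * T"
  define k' where "k' = cc m w / \<gamma>"
  have g0: "\<gamma> > 0" unfolding \<gamma>_def using gpos .
  have T0: "T > 0" unfolding T_def using m by simp
  have cB: "cc m (borda m) > 0"
    unfolding cc_def using borda_var[of m] m by simp
  have kB0: "kB > 0" unfolding kB_def using cB T0 by simp
  have k'0: "k' \<ge> 0" unfolding k'_def using cc_nonneg[of m w] m g0 by simp
  have klt: "k' < kB" using lt unfolding k'_def kB_def \<gamma>_def T_def .
  define r where "r = max (1/2) (k' / kB)"
  have r: "1/2 \<le> r" "r < 1" unfolding r_def using klt kB0 by (auto simp: divide_less_eq)
  have r0: "r > 0" using r by simp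
  have "k' / kB \<le> r" unfolding r_def by simp
  hence "kB * (k' / kB) \<le> kB * r" using kB0 by (intro mult_left_mono) auto
  hence kr: "k' \<le> r * kB" using kB0 by (simp add: mult.commute)
  obtain s where s0: "s > 0" and sm: "measure (gauss_m m) {z \<in> space (gauss_m m). XX m z \<le> s}
     < measure (gauss_m m) {z \<in> space (gauss_m m). XX m z \<le> s / r \<and> XX m z \<le> \<gamma> * AA m z}"
    using core[OF m r g0] by blast
  define v where "v = kB * s"
  have v0: "v \<ge> 0" unfolding v_def using kB0 s0 by simp
  have E1m: "{z \<in> space (gauss_m m). XX m z \<le> s} \<in> sets (gauss_m m)" by measurable
  have sub1: "{z \<in> space (gauss_m m). V_w m (borda m) z \<le> ereal v} \<subseteq> {z \<in> space (gauss_m m). XX m z \<le> s}"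
  proof safe
    fix z assume zs: "z \<in> space (gauss_m m)" and H: "V_w m (borda m) z \<le> ereal v"
    have "cc m (borda m) * T * AA m z + cc m (borda m) * T * BB m z \<le> v"
      using V_ge[OF borda_diag[OF m] H] unfolding T_def .
    hence "kB * XX m z \<le> kB * s" unfolding kB_def v_def AB_sum[of m z, symmetric] by (simp add: algebra_simps)
    thus "XX m z \<le> s" using kB0 by simp
  qed
  have sub2: "{z \<in> space (gauss_m m). XX m z \<le> s / r \<and> XX m z \<le> \<gamma> * AA m z}
      \<subseteq> {z \<in> space (gauss_m m). V_w m w z \<le> ereal v}"
  proof safe
    fix z assume zs: "z \<in> space (gauss_m m)" and x1: "XX m z \<le> s / r" and x2: "XX m z \<le> \<gamma> * AA m z"
    have X0: "XX m z \<ge> 0" using XX_nonneg m by simp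
    have "V_w m w z \<le> ereal (k' * XX m z)"
      unfolding k'_def \<gamma>_def by (rule region_bound) (use m pw i gpos x2 in \<open>auto simp: \<gamma>_def\<close>)
    also have "k' * XX m z \<le> (r * kB) * XX m z" using kr X0 by (rule mult_right_mono)
    also have "(r * kB) * XX m z \<le> (r * kB) * (s / r)"
      by (rule mult_left_mono[OF x1]) (use r0 kB0 in simp)
    also have "(r * kB) * (s / r) = v" unfolding v_def using r0 by simp
    finally show "V_w m w z \<le> ereal v" by simp
  qed
  have "measure (gauss_m m) {z \<in> space (gauss_m m). V_w m (borda m) z \<le> ereal v}
     \<le> measure (gauss_m m) {z \<in> space (gauss_m m). XX m z \<le> s}"
    by (rule G.finite_measure_mono[OF sub1 E1m])
  also note sm
  also have "measure (gauss_m m) {z \<in> space (gauss_m m). XX m z \<le> s / r \<and> XX m z \<le> \<gamma> * AA m z}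
     \<le> measure (gauss_m m) {z \<in> space (gauss_m m). V_w m w z \<le> ereal v}"
    by (rule G.finite_measure_mono[OF sub2 Vset_meas]) (use m in simp)
  finally have "g_w m (borda m) v < g_w m w v" unfolding g_w_def .
  moreover have "g_w m w v \<le> g_w m (borda m) v" using dom v0 unfolding dominates_def by blast
  ultimately show False by simp
qed




lemma sum3: fixes f :: "nat \<Rightarrow> real" shows "(\<Sum>i=1..3. f i) = f 1 + f 2 + f 3"
proof -
  have "{1..3::nat} = {1,2,3}" by auto
  thus ?thesis by simp
qed

lemma sum4: fixes f :: "nat \<Rightarrow> real" shows "(\<Sum>i=1..4. f i) = f 1 + f 2 + f 3 + f 4"
proof -
  have "{1..4::nat} = {1,2,3,4}" by auto
  thus ?thesis by simp
qed

lemma part3: assumes pw: "positional_rule 3 w" and d: "\<exists>i\<in>{1..3}. w i \<noteq> borda 3 i"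
  shows "\<not> dominates 3 w (borda 3)"
proof -
  have w1: "w 1 = 1" and w3: "w 3 = 0" using pw unfolding positional_rule_def by auto
  define a where "a = w 2"
  have a: "0 \<le> a" "a \<le> 1" unfolding a_def using pos_bounds[OF pw, of 2] by auto
  have b: "borda 3 1 = 1" "borda 3 2 = 1/2" "borda 3 3 = 0" unfolding borda_def by auto
  have an: "a \<noteq> 1/2"
  proof
    assume "a = 1/2"
    moreover have "{1..3::nat} = {1,2,3}" by auto
    ultimately have "\<forall>i\<in>{1..3}. w i = borda 3 i" using w1 w3 b unfolding a_def by auto
    thus False using d by blast
  qed
  have var: "9 * ((\<Sum>i=1..3. (w i)\<^sup>2) / real 3 - (wbar 3 w)\<^sup>2) = 3 * (1 + a^2) - (1 + a)^2"
    unfolding wbar_def sum3 w1 w3 a_def[symmetric] by (simp add: power2_eq_square field_simps)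
  have rhs: "(real 3 + 1) / (12 * (real 3 - 1)) * ((real 3 - 1) / (real 3 - 2))^2 = (2/3::real)" by simp
  show ?thesis
  proof (cases "a > 1/2")
    case True
    have "3 * (1 + a^2) - (1 + a)^2 < 6 * a^2" by (rule p3a[OF True])
    hence "(\<Sum>i=1..3. (w i)\<^sup>2) / real 3 - (wbar 3 w)\<^sup>2 < (2/3) * a^2" using var by simp
    hence vv: "(\<Sum>i=1..3. (w i)\<^sup>2) / real 3 - (wbar 3 w)\<^sup>2 < (real 3 + 1) / (12 * (real 3 - 1)) * ((real 3 - 1) / (real 3 - 2))^2 * a^2" unfolding rhs .
    hence lt: "cc 3 w / a < cc 3 (borda 3) * ((real 3 - 1) / (real 3 - 2))"
      using True by (intro key_generic[OF _ _ vv]) auto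
    have e: "(1::nat) + 1 = 2" by simp
    have g: "1 + w (1+1) - w 1 = a" unfolding e a_def w1 by simp
    have g1: "1 + w (1+1) - w 1 > 0" unfolding g using True by simp
    have g2: "cc 3 w / (1 + w (1+1) - w 1) < cc 3 (borda 3) * ((real 3 - 1) / (real 3 - 2))" unfolding g by (rule lt)
    show ?thesis by (rule nondom[OF _ pw _ g1 g2]) auto
  next
    case False
    hence lt2: "a < 1/2" using an by simp
    have "3 * (1 + a^2) - (1 + a)^2 < 6 * (1 - a)^2" by (rule p3b[OF lt2])
    hence "(\<Sum>i=1..3. (w i)\<^sup>2) / real 3 - (wbar 3 w)\<^sup>2 < (2/3) * (1 - a)^2" using var by simp
    hence vv: "(\<Sum>i=1..3. (w i)\<^sup>2) / real 3 - (wbar 3 w)\<^sup>2 < (real 3 + 1) / (12 * (real 3 - 1)) * ((real 3 - 1) / (real 3 - 2))^2 * (1 - a)^2" unfolding rhs .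
    hence lt: "cc 3 w / (1 - a) < cc 3 (borda 3) * ((real 3 - 1) / (real 3 - 2))"
      using lt2 by (intro key_generic[OF _ _ vv]) auto
    have e: "(2::nat) + 1 = 3" by simp
    have g: "1 + w (2+1) - w 2 = 1 - a" unfolding e a_def using w3 by simp
    have g1: "1 + w (2+1) - w 2 > 0" unfolding g using lt2 by simp
    have g2: "cc 3 w / (1 + w (2+1) - w 2) < cc 3 (borda 3) * ((real 3 - 1) / (real 3 - 2))" unfolding g by (rule lt)
    show ?thesis by (rule nondom[OF _ pw _ g1 g2]) auto
  qed
qed

lemma part4: assumes pw: "positional_rule 4 w" and d: "\<exists>i\<in>{1..4}. w i \<noteq> borda 4 i"
  shows "\<not> dominates 4 w (borda 4)"
proof -
  have w1: "w 1 = 1" and w4: "w 4 = 0" using pw unfolding positional_rule_def by auto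
  define a where "a = w 2"
  define b where "b = w 3"
  have ab: "0 \<le> b" "b \<le> a" "a \<le> 1" unfolding a_def b_def
    using pos_bounds[OF pw, of 2] pos_bounds[OF pw, of 3] pw unfolding positional_rule_def by auto
  have bo: "borda 4 1 = 1" "borda 4 2 = 2/3" "borda 4 3 = 1/3" "borda 4 4 = 0" unfolding borda_def by auto
  have an: "\<not> (a = 2/3 \<and> b = 1/3)"
  proof
    assume "a = 2/3 \<and> b = 1/3"
    moreover have "{1..4::nat} = {1,2,3,4}" by auto
    ultimately have "\<forall>i\<in>{1..4}. w i = borda 4 i" using w1 w4 bo unfolding a_def b_def by auto
    thus False using d by blast
  qed
  have var: "16 * ((\<Sum>i=1..4. (w i)\<^sup>2) / real 4 - (wbar 4 w)\<^sup>2) = 4 * (1 + a^2 + b^2) - (1 + a + b)^2"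
    unfolding wbar_def sum4 w1 w4 a_def[symmetric] b_def[symmetric] by (simp add: power2_eq_square field_simps)
  have rhs: "(real 4 + 1) / (12 * (real 4 - 1)) * ((real 4 - 1) / (real 4 - 2))^2 = (5/16::real)" by (simp add: power2_eq_square)
  consider "a \<ge> 1 + b - a \<and> a \<ge> 1 - b" | "1 + b - a > a \<and> 1 + b - a \<ge> 1 - b" | "1 - b > a \<and> 1 - b > 1 + b - a"
    by linarith
  thus ?thesis
  proof cases
    case 1
    have "4 * (1 + a^2 + b^2) - (1 + a + b)^2 < 5 * a^2" by (rule p4a) (use ab 1 an in auto)
    hence "(\<Sum>i=1..4. (w i)\<^sup>2) / real 4 - (wbar 4 w)\<^sup>2 < (5/16) * a^2" using var by simp
    hence vv: "(\<Sum>i=1..4. (w i)\<^sup>2) / real 4 - (wbar 4 w)\<^sup>2 < (real 4 + 1) / (12 * (real 4 - 1)) * ((real 4 - 1) / (real 4 - 2))^2 * a^2" unfolding rhs .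
    moreover have a0: "a > 0" using 1 ab by linarith
    ultimately have lt: "cc 4 w / a < cc 4 (borda 4) * ((real 4 - 1) / (real 4 - 2))"
      by (intro key_generic[OF _ _ vv]) auto
    have e: "(1::nat) + 1 = 2" by simp
    have g: "1 + w (1+1) - w 1 = a" unfolding e a_def w1 by simp
    have g1: "1 + w (1+1) - w 1 > 0" unfolding g using a0 by simp
    have g2: "cc 4 w / (1 + w (1+1) - w 1) < cc 4 (borda 4) * ((real 4 - 1) / (real 4 - 2))" unfolding g by (rule lt)
    show ?thesis by (rule nondom[OF _ pw _ g1 g2]) auto
  next
    case 2
    have "4 * (1 + a^2 + b^2) - (1 + a + b)^2 < 5 * (1 + b - a)^2" by (rule p4b) (use ab 2 in auto)
    hence "(\<Sum>i=1..4. (w i)\<^sup>2) / real 4 - (wbar 4 w)\<^sup>2 < (5/16) * (1 + b - a)^2" using var by simp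
    hence vv: "(\<Sum>i=1..4. (w i)\<^sup>2) / real 4 - (wbar 4 w)\<^sup>2 < (real 4 + 1) / (12 * (real 4 - 1)) * ((real 4 - 1) / (real 4 - 2))^2 * (1 + b - a)^2" unfolding rhs .
    moreover have a0: "1 + b - a > 0" using 2 ab by linarith
    ultimately have lt: "cc 4 w / (1 + b - a) < cc 4 (borda 4) * ((real 4 - 1) / (real 4 - 2))"
      by (intro key_generic[OF _ _ vv]) auto
    have e: "(2::nat) + 1 = 3" by simp
    have g: "1 + w (2+1) - w 2 = 1 + b - a" unfolding e a_def b_def by simp
    have g1: "1 + w (2+1) - w 2 > 0" unfolding g using a0 by simp
    have g2: "cc 4 w / (1 + w (2+1) - w 2) < cc 4 (borda 4) * ((real 4 - 1) / (real 4 - 2))" unfolding g by (rule lt)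
    show ?thesis by (rule nondom[OF _ pw _ g1 g2]) auto
  next
    case 3
    have "4 * (1 + a^2 + b^2) - (1 + a + b)^2 < 5 * (1 - b)^2" by (rule p4c) (use ab 3 in auto)
    hence "(\<Sum>i=1..4. (w i)\<^sup>2) / real 4 - (wbar 4 w)\<^sup>2 < (5/16) * (1 - b)^2" using var by simp
    hence vv: "(\<Sum>i=1..4. (w i)\<^sup>2) / real 4 - (wbar 4 w)\<^sup>2 < (real 4 + 1) / (12 * (real 4 - 1)) * ((real 4 - 1) / (real 4 - 2))^2 * (1 - b)^2" unfolding rhs .
    moreover have a0: "1 - b > 0" using 3 ab by linarith
    ultimately have lt: "cc 4 w / (1 - b) < cc 4 (borda 4) * ((real 4 - 1) / (real 4 - 2))"
      by (intro key_generic[OF _ _ vv]) auto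
    have e: "(3::nat) + 1 = 4" by simp
    have g: "1 + w (3+1) - w 3 = 1 - b" unfolding e b_def using w4 by simp
    have g1: "1 + w (3+1) - w 3 > 0" unfolding g using a0 by simp
    have g2: "cc 4 w / (1 + w (3+1) - w 3) < cc 4 (borda 4) * ((real 4 - 1) / (real 4 - 2))" unfolding g by (rule lt)
    show ?thesis by (rule nondom[OF _ pw _ g1 g2]) auto
  qed
qed

theorem proposition14:
  fixes m :: nat
  shows "(m \<in> {3, 4} \<longrightarrow>
           (\<nexists>w'. positional_rule m w' \<and> (\<exists>i\<in>{1..m}. w' i \<noteq> borda m i) \<and>
                  dominates m w' (borda m)))
       \<and> (m \<ge> 5 \<longrightarrow>
           positional_rule m (approval m (m div 2)) \<and>
           (\<exists>i\<in>{1..m}. approval m (m div 2) i \<noteq> borda m i) \<and>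
           dominates m (approval m (m div 2)) (borda m))"
proof (rule conjI; rule impI)
  assume "m \<in> {3, 4}"
  thus "\<nexists>w'. positional_rule m w' \<and> (\<exists>i\<in>{1..m}. w' i \<noteq> borda m i) \<and> dominates m w' (borda m)"
    using part3 part4 by auto
next
  assume "m \<ge> 5"
  thus "positional_rule m (approval m (m div 2)) \<and>
           (\<exists>i\<in>{1..m}. approval m (m div 2) i \<noteq> borda m i) \<and>
           dominates m (approval m (m div 2)) (borda m)" by (rule part5)
qed


end
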